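(* Let $\mathcal{S}$ be an inverse semigroupoid. The following are equivalent: (i) $\mathcal{S}$ is $E$-unitary, i.e. $\sigma$ is idempotent pure; (ii) the canonical quotient map $\pi_\sigma:\mathcal{S}\to\mathcal{S}/\sigma$ is idempotent pure, i.e. $\pi_\sigma^{-1}(E(\mathcal{S}/\sigma))\subseteq E(\mathcal{S})$; (iii) if $(s,t)\in\sigma$, then $s^*t\in E(\mathcal{S})$ and $st^*\in E(\mathcal{S})$; (iv) for all $s,t\in\mathcal{S}$, $(s,t)\in\sigma$ if and only if $s^*t\in E(\mathcal{S})$ and $st^*\in E(\mathcal{S})$; (v) if $s\in\mathcal{S}$, $e\in E(\mathcal{S})$ and $e\leqslant s$, then $s\in E(\mathcal{S})$.
   Context: A semigroupoid consists of a set $\mathcal{S}$ of arrows, a set $\mathcal{S}^{(0)}$ of objects, maps $d,c:\mathcal{S}\to\mathcal{S}^{(0)}$, composable pairs $\mathcal{S}^{(2)}=\{(s,t): d(s)=c(t)\}$ and an associative multiplication on $\mathcal{S}^{(2)}$ with $d(st)=d(t)$, $c(st)=c(s)$. It is an inverse semigroupoid if each $s$ has a unique $s^*$ with $(s,s^* ),(s^*,s)\in\mathcal{S}^{(2)}$, $ss^*s=s$, $s^*ss^*=s^*$. $E(\mathcal{S})$ is the set of idempotents. Natural partial order: for parallel $s,t$ (same domain and codomain), $s\leqslant t$ iff $s=te$ for some $e\in E(\mathcal{S})$ with $(t,e)\in\mathcal{S}^{(2)}$. $(s,t)\in\sigma$ iff there is $r$ with $r\leqslant s$ and $r\leqslant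 t$; $\sigma$ is a congruence and the quotient $\mathcal{S}/\sigma$ (arrows the $\sigma$-classes, objects $\mathcal{S}^{(0)}$, $d(\pi_\sigma(s))=d(s)$, $c(\pi_\sigma(s))=c(s)$, $\pi_\sigma(s)\pi_\sigma(t)=\pi_\sigma(st)$) is a groupoid. A congruence $R$ is idempotent pure if $(s,e)\in R$ and $e\in E(\mathcal{S})$ imply $s\in E(\mathcal{S})$. $\mathcal{S}$ is called $E$-unitary if $\sigma$ is idempotent pure. *)

theory Defs
  imports Main
begin

text \<open>A semigroupoid: arrows, objects, domain, codomain, and a (total HOL function) product
  that is only meaningful on composable pairs.\<close>

record ('a, 'b) sgpd =
  arr :: "'a set"
  obj :: "'b set"
  dom :: "'a \<Rightarrow> 'b"
  cod :: "'a \<Rightarrow> 'b"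
  mult :: "'a \<Rightarrow> 'a \<Rightarrow> 'a"

definition composable :: "('a, 'b) sgpd \<Rightarrow> 'a \<Rightarrow> 'a \<Rightarrow> bool" where
  "composable S s t \<longleftrightarrow> s \<in> arr S \<and> t \<in> arr S \<and> dom S s = cod S t"

definition semigroupoid :: "('a, 'b) sgpd \<Rightarrow> bool" where
  "semigroupoid S \<longleftrightarrow>
     (\<forall>s\<in>arr S. dom S s \<in> obj S \<and> cod S s \<in> obj S) \<and>
     (\<forall>s t. composable S s t \<longrightarrow>
        mult S s t \<in> arr S \<and> dom S (mult S s t) = dom S t \<and> cod S (mult S s t) = cod S s) \<and>
     (\<forall>s t u. composable S s t \<and> composable S t u \<longrightarrow>
        mult S (mult S s t) u = mult S s (mult S t u))"

definition is_inverse :: "('a, 'b) sgpd \<Rightarrow> 'a \<Rightarrow> 'a \<Rightarrow> bool" where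
  "is_inverse S s s' \<longleftrightarrow> s' \<in> arr S \<and> composable S s s' \<and> composable S s' s \<and>
     mult S (mult S s s') s = s \<and> mult S (mult S s' s) s' = s'"

definition inverse_semigroupoid :: "('a, 'b) sgpd \<Rightarrow> bool" where
  "inverse_semigroupoid S \<longleftrightarrow> semigroupoid S \<and> (\<forall>s\<in>arr S. \<exists>!s'. is_inverse S s s')"

definition star :: "('a, 'b) sgpd \<Rightarrow> 'a \<Rightarrow> 'a" where
  "star S s = (THE s'. is_inverse S s s')"

definition idems :: "('a, 'b) sgpd \<Rightarrow> 'a set" where
  "idems S = {e \<in> arr S. composable S e e \<and> mult S e e = e}"

definition npo :: "('a, 'b) sgpd \<Rightarrow> 'a \<Rightarrow> 'a \<Rightarrow> bool" where
  "npo S s t \<longleftrightarrow> s \<in> arr S \<and> t \<in> arr S \<and> dom S s = dom S t \<and> cod S s = cod S t \<and>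
     (\<exists>e\<in>idems S. composable S t e \<and> s = mult S t e)"

definition sigma :: "('a, 'b) sgpd \<Rightarrow> ('a \<times> 'a) set" where
  "sigma S = {(s, t). s \<in> arr S \<and> t \<in> arr S \<and> (\<exists>r. npo S r s \<and> npo S r t)}"

definition idempotent_pure :: "('a, 'b) sgpd \<Rightarrow> ('a \<times> 'a) set \<Rightarrow> bool" where
  "idempotent_pure S R \<longleftrightarrow> (\<forall>s e. (s, e) \<in> R \<and> e \<in> idems S \<longrightarrow> s \<in> idems S)"

definition E_unitary :: "('a, 'b) sgpd \<Rightarrow> bool" where
  "E_unitary S \<longleftrightarrow> idempotent_pure S (sigma S)"

definition pi_sigma :: "('a, 'b) sgpd \<Rightarrow> 'a \<Rightarrow> 'a set" where
  "pi_sigma S s = sigma S `` {s}"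

definition quot_sigma :: "('a, 'b) sgpd \<Rightarrow> ('a set, 'b) sgpd" where
  "quot_sigma S =
     \<lparr> arr = pi_sigma S ` arr S,
       obj = obj S,
       dom = (\<lambda>X. dom S (SOME x. x \<in> X)),
       cod = (\<lambda>X. cod S (SOME x. x \<in> X)),
       mult = (\<lambda>X Y. pi_sigma S (mult S (SOME x. x \<in> X) (SOME y. y \<in> Y))) \<rparr>"

definition prod_idem :: "('a, 'b) sgpd \<Rightarrow> 'a \<Rightarrow> 'a \<Rightarrow> bool" where
  "prod_idem S s t \<longleftrightarrow> composable S s t \<and> mult S s t \<in> idems S"

end

theory Submission
  imports Defs
begin

context
  fixes S :: "('a, 'b) sgpd"
  assumes inv: "inverse_semigroupoid S"
begin

abbreviation m (infixl "\<cdot>" 70) where "s \<cdot> t \<equiv> mult S s t"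
abbreviation st where "st s \<equiv> star S s"

lemma sg: "semigroupoid S" using inv unfolding inverse_semigroupoid_def by blast

lemma m_arr[simp]: "s \<in> arr S \<Longrightarrow> t \<in> arr S \<Longrightarrow> dom S s = cod S t \<Longrightarrow> s \<cdot> t \<in> arr S"
  and m_dom[simp]: "s \<in> arr S \<Longrightarrow> t \<in> arr S \<Longrightarrow> dom S s = cod S t \<Longrightarrow> dom S (s \<cdot> t) = dom S t"
  and m_cod[simp]: "s \<in> arr S \<Longrightarrow> t \<in> arr S \<Longrightarrow> dom S s = cod S t \<Longrightarrow> cod S (s \<cdot> t) = cod S s"
  using sg unfolding semigroupoid_def composable_def by auto

lemma assoc[simp]: "s \<in> arr S \<Longrightarrow> t \<in> arr S \<Longrightarrow> u \<in> arr S \<Longrightarrow> dom S s = cod S t \<Longrightarrow> dom S t = cod S u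
  \<Longrightarrow> (s \<cdot> t) \<cdot> u = s \<cdot> (t \<cdot> u)"
  using sg unfolding semigroupoid_def composable_def by auto

lemma inv_st: "s \<in> arr S \<Longrightarrow> is_inverse S s (st s)"
  using inv unfolding inverse_semigroupoid_def star_def by (metis theI')

lemma inv_uniq: "s \<in> arr S \<Longrightarrow> is_inverse S s x \<Longrightarrow> x = st s"
  using inv inv_st unfolding inverse_semigroupoid_def by blast

lemma st_arr[simp]: "s \<in> arr S \<Longrightarrow> st s \<in> arr S"
  and st_dom[simp]: "s \<in> arr S \<Longrightarrow> dom S (st s) = cod S s"
  and st_cod[simp]: "s \<in> arr S \<Longrightarrow> cod S (st s) = dom S s"
  using inv_st[of s] unfolding is_inverse_def composable_def by auto

lemma sss[simp]: "s \<in> arr S \<Longrightarrow> s \<cdot> (st s \<cdot> s) = s"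
  and sss2[simp]: "s \<in> arr S \<Longrightarrow> st s \<cdot> (s \<cdot> st s) = st s"
  using inv_st[of s] unfolding is_inverse_def composable_def by auto

lemma sssx[simp]: "s \<in> arr S \<Longrightarrow> x \<in> arr S \<Longrightarrow> dom S s = cod S x \<Longrightarrow> s \<cdot> (st s \<cdot> (s \<cdot> x)) = s \<cdot> x"
  by (metis assoc m_arr m_cod m_dom sss st_arr st_cod st_dom)
lemma sssx2[simp]: "s \<in> arr S \<Longrightarrow> x \<in> arr S \<Longrightarrow> cod S s = cod S x \<Longrightarrow> st s \<cdot> (s \<cdot> (st s \<cdot> x)) = st s \<cdot> x"
  by (metis assoc m_arr m_cod m_dom sss2 st_arr st_cod st_dom)

lemma st_st[simp]: "s \<in> arr S \<Longrightarrow> st (st s) = s"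
  by (metis inv_st inv_uniq is_inverse_def composable_def st_arr)

lemma idemsD: "e \<in> idems S \<Longrightarrow> e \<in> arr S \<and> dom S e = cod S e \<and> e \<cdot> e = e"
  unfolding idems_def composable_def by auto
lemma idemsI: "e \<in> arr S \<Longrightarrow> dom S e = cod S e \<Longrightarrow> e \<cdot> e = e \<Longrightarrow> e \<in> idems S"
  unfolding idems_def composable_def by auto

lemma idem_st: "e \<in> idems S \<Longrightarrow> st e = e"
  using idemsD[of e] inv_uniq[of e e] unfolding is_inverse_def composable_def by auto

lemma idem_ee: "e \<in> idems S \<Longrightarrow> x \<in> arr S \<Longrightarrow> dom S e = cod S x \<Longrightarrow> e \<cdot> (e \<cdot> x) = e \<cdot> x"
  by (metis assoc idemsD)

lemma idem_ee': "e \<cdot> e = e \<Longrightarrow> e \<in> arr S \<Longrightarrow> x \<in> arr S \<Longrightarrow> dom S e = cod S e \<Longrightarrow> dom S e = cod S x \<Longrightarrow> e \<cdot> (e \<cdot> x) = e \<cdot> x"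
  by (metis assoc)

lemma commute:
  assumes e: "e \<in> idems S" and f: "f \<in> idems S" and d: "dom S e = dom S f"
  shows "e \<cdot> f = f \<cdot> e \<and> e \<cdot> f \<in> idems S"
proof -
  have ea: "e \<in> arr S" "dom S e = cod S e" "e \<cdot> e = e" using idemsD[OF e] by auto
  have fa: "f \<in> arr S" "dom S f = cod S f" "f \<cdot> f = f" using idemsD[OF f] by auto
  have gen: "\<And>e f. e \<in> idems S \<Longrightarrow> f \<in> idems S \<Longrightarrow> dom S e = dom S f \<Longrightarrow> e \<cdot> f \<in> idems S"
  proof -
    fix e f assume e: "e \<in> idems S" and f: "f \<in> idems S" and d: "dom S e = dom S f"
    have ea: "e \<in> arr S" "dom S e = cod S e" "e \<cdot> e = e" using idemsD[OF e] by auto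
    have fa: "f \<in> arr S" "dom S f = cod S f" "f \<cdot> f = f" using idemsD[OF f] by auto
    define x where "x = st (e \<cdot> f)"
    have efa: "e \<cdot> f \<in> arr S" using ea fa d by simp
    have xa: "x \<in> arr S" "dom S x = dom S e" "cod S x = dom S e" using efa ea fa d by (auto simp: x_def)
    have efx: "e \<cdot> (f \<cdot> (x \<cdot> (e \<cdot> f))) = e \<cdot> f"
      using sss[OF efa] ea fa d xa by (simp del: sss add: x_def)
    have xefx: "x \<cdot> (e \<cdot> (f \<cdot> x)) = x"
      using sss2[OF efa] ea fa d xa by (simp del: sss2 add: x_def)
    define y where "y = f \<cdot> (x \<cdot> e)"
    have ya: "y \<in> arr S" "dom S y = dom S e" "cod S y = dom S e" using xa ea fa d by (auto simp: y_def)
    have "is_inverse S (e \<cdot> f) y"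
      unfolding is_inverse_def composable_def
    proof (intro conjI)
      show "(e \<cdot> f) \<cdot> y \<cdot> (e \<cdot> f) = e \<cdot> f"
        using ea fa d xa ya efx by (simp add: y_def idem_ee')
      have h: "x \<cdot> (e \<cdot> (f \<cdot> (x \<cdot> e))) = x \<cdot> e"
      proof -
        have "(x \<cdot> (e \<cdot> (f \<cdot> x))) \<cdot> e = x \<cdot> e" using xefx by simp
        thus ?thesis using ea fa d xa by simp
      qed
      show "y \<cdot> (e \<cdot> f) \<cdot> y = y"
        using ea fa d xa ya h by (simp add: y_def idem_ee')
    qed (use ya efa ea fa d in auto)
    hence yx: "y = x" using inv_uniq efa x_def by blast
    have "x \<cdot> x = x"
    proof -
      have "x \<cdot> x = y \<cdot> y" using yx by simp
      also have "\<dots> = f \<cdot> (x \<cdot> (e \<cdot> (f \<cdot> (x \<cdot> e))))"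
        using ea fa d xa by (simp add: y_def idem_ee')
      also have "\<dots> = f \<cdot> (x \<cdot> e)"
      proof -
        have "(x \<cdot> (e \<cdot> (f \<cdot> x))) \<cdot> e = x \<cdot> e" using xefx by simp
        thus ?thesis using ea fa d xa by simp
      qed
      finally show ?thesis using yx y_def by simp
    qed
    hence "x \<in> idems S" using xa by (auto intro: idemsI)
    hence "st x = x" by (rule idem_st)
    thus "e \<cdot> f \<in> idems S" using `x \<in> idems S` st_st[OF efa] x_def by simp
  qed
  have ef: "e \<cdot> f \<in> idems S" using gen e f d .
  have fe: "f \<cdot> e \<in> idems S" using gen e f d by simp
  have efa: "e \<cdot> f \<in> arr S" using ea fa d by simp
  have "is_inverse S (e \<cdot> f) (f \<cdot> e)"
    unfolding is_inverse_def composable_def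
  proof (intro conjI)
    show "(e \<cdot> f) \<cdot> (f \<cdot> e) \<cdot> (e \<cdot> f) = e \<cdot> f"
      using ea fa d idemsD[OF ef] by (simp add: idem_ee')
    show "(f \<cdot> e) \<cdot> (e \<cdot> f) \<cdot> (f \<cdot> e) = f \<cdot> e"
      using ea fa d idemsD[OF fe] by (simp add: idem_ee')
  qed (use ea fa d in auto)
  hence "f \<cdot> e = st (e \<cdot> f)" using inv_uniq efa by blast
  hence "f \<cdot> e = e \<cdot> f" using idem_st[OF ef] by simp
  thus ?thesis using ef by simp
qed


lemma idem_prod: "e \<in> idems S \<Longrightarrow> f \<in> idems S \<Longrightarrow> dom S e = cod S f \<Longrightarrow> e \<cdot> f \<in> idems S"
  using commute idemsD by metis

lemma comm_x: "e \<in> idems S \<Longrightarrow> f \<in> idems S \<Longrightarrow> dom S e = dom S f \<Longrightarrow> x \<in> arr S \<Longrightarrow> dom S f = cod S x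
  \<Longrightarrow> e \<cdot> (f \<cdot> x) = f \<cdot> (e \<cdot> x)"
  by (metis assoc commute idemsD)

lemma st_idem: "s \<in> arr S \<Longrightarrow> st s \<cdot> s \<in> idems S"
  and st_idem2: "s \<in> arr S \<Longrightarrow> s \<cdot> st s \<in> idems S"
  by (auto intro!: idemsI)

lemma F: assumes t: "t \<in> arr S" and e: "e \<in> idems S" and d: "dom S t = cod S e"
  shows "t \<cdot> (e \<cdot> st t) \<in> idems S"
proof -
  have ea: "e \<in> arr S" "dom S e = cod S e" "e \<cdot> e = e" using idemsD[OF e] by auto
  have c: "e \<cdot> (st t \<cdot> (t \<cdot> (e \<cdot> st t))) = st t \<cdot> (t \<cdot> (e \<cdot> (e \<cdot> st t)))"
  proof -
    have "e \<cdot> ((st t \<cdot> t) \<cdot> (e \<cdot> st t)) = (st t \<cdot> t) \<cdot> (e \<cdot> (e \<cdot> st t))"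
      using comm_x[OF e st_idem[OF t], of "e \<cdot> st t"] t ea d by simp
    thus ?thesis using t ea d by simp
  qed
  have "t \<cdot> (e \<cdot> st t) \<cdot> (t \<cdot> (e \<cdot> st t)) = t \<cdot> (e \<cdot> st t)"
    using t ea d c by (simp add: idem_ee')
  thus ?thesis using t ea d by (auto intro!: idemsI)
qed

lemma L: assumes h: "h \<in> idems S" and y: "y \<in> arr S" and d: "dom S h = cod S y"
  shows "h \<cdot> y = y \<cdot> (st y \<cdot> (h \<cdot> y)) \<and> st y \<cdot> (h \<cdot> y) \<in> idems S"
proof
  have ha: "h \<in> arr S" "dom S h = cod S h" "h \<cdot> h = h" using idemsD[OF h] by auto
  have "(y \<cdot> st y) \<cdot> (h \<cdot> y) = h \<cdot> ((y \<cdot> st y) \<cdot> y)"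
    using comm_x[OF st_idem2[OF y] h, of y] y ha d by simp
  thus "h \<cdot> y = y \<cdot> (st y \<cdot> (h \<cdot> y))" using y ha d by simp
  show "st y \<cdot> (h \<cdot> y) \<in> idems S"
    using F[of "st y" h] y h d idemsD[OF h] by simp
qed

lemma npoD: "npo S r t \<Longrightarrow> r \<in> arr S \<and> t \<in> arr S \<and> dom S r = dom S t \<and> cod S r = cod S t"
  unfolding npo_def by auto

lemma npo_right: assumes "npo S r t" shows "r = t \<cdot> (st r \<cdot> r)"
proof -
  obtain f where f: "f \<in> idems S" "dom S t = cod S f" "r = t \<cdot> f" and ra: "r \<in> arr S" "t \<in> arr S"
    using assms unfolding npo_def composable_def by auto
  have fa: "f \<in> arr S" "dom S f = cod S f" "f \<cdot> f = f" using idemsD[OF f(1)] by auto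
  have rf: "r \<cdot> f = r" using f fa ra by (simp add: idem_ee')
  have df: "dom S r = dom S f" using f fa ra by simp
  have "(st r \<cdot> r) \<cdot> f = st r \<cdot> r" using rf ra fa df by simp
  moreover have "(st r \<cdot> r) \<cdot> f = f \<cdot> (st r \<cdot> r)"
    using commute[OF st_idem[OF ra(1)] f(1)] ra df by simp
  ultimately have e: "f \<cdot> (st r \<cdot> r) = st r \<cdot> r" by simp
  have "t \<cdot> (st r \<cdot> r) = t \<cdot> (f \<cdot> (st r \<cdot> r))" using e by simp
  also have "\<dots> = (t \<cdot> f) \<cdot> (st r \<cdot> r)" using ra fa f(1,2) df by simp
  also have "\<dots> = r" by (subst f(3)[symmetric], rule sss[OF ra(1)])
  finally show ?thesis by simp
qed

lemma npoI: "r \<in> arr S \<Longrightarrow> t \<in> arr S \<Longrightarrow> dom S r = dom S t \<Longrightarrow> cod S r = cod S t \<Longrightarrow> e \<in> idems S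
  \<Longrightarrow> dom S t = cod S e \<Longrightarrow> r = t \<cdot> e \<Longrightarrow> npo S r t"
  unfolding npo_def composable_def by (auto simp: idems_def)

lemma npo_refl: "s \<in> arr S \<Longrightarrow> npo S s s"
  by (rule npoI[where e="st s \<cdot> s"]) (auto intro: st_idem)

lemma sigma_refl: "s \<in> arr S \<Longrightarrow> (s, s) \<in> sigma S"
  unfolding sigma_def using npo_refl by blast

lemma sigma_sym: "(s, t) \<in> sigma S \<Longrightarrow> (t, s) \<in> sigma S"
  unfolding sigma_def by blast

lemma sigma_par: "(s, t) \<in> sigma S \<Longrightarrow> s \<in> arr S \<and> t \<in> arr S \<and> dom S s = dom S t \<and> cod S s = cod S t"
  unfolding sigma_def npo_def by auto

lemma sigma_trans: assumes "(a, b) \<in> sigma S" "(b, c) \<in> sigma S" shows "(a, c) \<in> sigma S"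
proof -
  obtain r1 where r1: "npo S r1 a" "npo S r1 b" using assms(1) unfolding sigma_def by blast
  obtain r2 where r2: "npo S r2 b" "npo S r2 c" using assms(2) unfolding sigma_def by blast
  define e1 where "e1 = st r1 \<cdot> r1"
  define e2 where "e2 = st r2 \<cdot> r2"
  have p1: "r1 \<in> arr S" "a \<in> arr S" "b \<in> arr S" "dom S r1 = dom S a" "cod S r1 = cod S a" "dom S r1 = dom S b" "cod S r1 = cod S b"
    using npoD[OF r1(1)] npoD[OF r1(2)] by auto
  have p2: "r2 \<in> arr S" "c \<in> arr S" "dom S r2 = dom S c" "cod S r2 = cod S c" "dom S r2 = dom S b" "cod S r2 = cod S b"
    using npoD[OF r2(1)] npoD[OF r2(2)] by auto
  have e1: "e1 \<in> idems S" "dom S e1 = dom S b" "cod S e1 = dom S b" using st_idem p1 by (auto simp: e1_def)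
  have e2: "e2 \<in> idems S" "dom S e2 = dom S b" "cod S e2 = dom S b" using st_idem p2 by (auto simp: e2_def)
  have c12: "e1 \<cdot> e2 = e2 \<cdot> e1" "e1 \<cdot> e2 \<in> idems S" using commute[OF e1(1) e2(1)] e1 e2 by auto
  have ea1: "e1 \<in> arr S" and ea2: "e2 \<in> arr S" using e1 e2 idemsD by auto
  have a1: "r1 = a \<cdot> e1" "r1 = b \<cdot> e1" using npo_right r1 e1_def by auto
  have a2: "r2 = b \<cdot> e2" "r2 = c \<cdot> e2" using npo_right r2 e2_def by auto
  define r where "r = b \<cdot> (e1 \<cdot> e2)"
  have "r = a \<cdot> (e1 \<cdot> e2)"
  proof -
    have "r = (b \<cdot> e1) \<cdot> e2" using p1 ea1 ea2 e1 e2 by (simp add: r_def)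
    also have "\<dots> = (a \<cdot> e1) \<cdot> e2" using a1 by simp
    also have "\<dots> = a \<cdot> (e1 \<cdot> e2)" using p1 ea1 ea2 e1 e2 by simp
    finally show ?thesis .
  qed
  hence n1: "npo S r a" using p1 ea1 ea2 e1 e2 c12 by (intro npoI[where e="e1 \<cdot> e2"]) auto
  have "r = c \<cdot> (e2 \<cdot> e1)"
  proof -
    have "r = (b \<cdot> e2) \<cdot> e1" using p1 ea1 ea2 e1 e2 c12 by (simp add: r_def)
    also have "\<dots> = (c \<cdot> e2) \<cdot> e1" using a2 by simp
    also have "\<dots> = c \<cdot> (e2 \<cdot> e1)" using p1 p2 ea1 ea2 e1 e2 by simp
    finally show ?thesis .
  qed
  hence n2: "npo S r c" using p1 p2 ea1 ea2 e1 e2 c12 by (intro npoI[where e="e2 \<cdot> e1"]) auto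
  show ?thesis unfolding sigma_def using n1 n2 p1 p2 by blast
qed


lemma npo_idem: assumes "npo S r e" "e \<in> idems S" shows "r \<in> idems S"
proof -
  obtain f where f: "f \<in> idems S" "dom S e = cod S f" "r = e \<cdot> f"
    using assms unfolding npo_def composable_def by auto
  thus ?thesis using idem_prod assms(2) by simp
qed

lemma one_five: assumes "idempotent_pure S (sigma S)" "s \<in> arr S" "e \<in> idems S" "npo S e s"
  shows "s \<in> idems S"
proof -
  have "e \<in> arr S" using assms(3) idemsD by auto
  hence "npo S e e" by (rule npo_refl)
  hence "(s, e) \<in> sigma S" using assms unfolding sigma_def by (auto dest: npoD)
  thus ?thesis using assms unfolding idempotent_pure_def by blast
qed

lemma five_one: assumes P5: "\<forall>s e. s \<in> arr S \<and> e \<in> idems S \<and> npo S e s \<longrightarrow> s \<in> idems S"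
  shows "idempotent_pure S (sigma S)"
  unfolding idempotent_pure_def
proof (intro allI impI)
  fix s e assume a: "(s, e) \<in> sigma S \<and> e \<in> idems S"
  then obtain r where r: "npo S r s" "npo S r e" unfolding sigma_def by blast
  have "r \<in> idems S" using npo_idem r a by blast
  thus "s \<in> idems S" using P5 r a sigma_par by blast
qed

lemma five_three: assumes P5: "\<forall>s e. s \<in> arr S \<and> e \<in> idems S \<and> npo S e s \<longrightarrow> s \<in> idems S"
  and st: "(s, t) \<in> sigma S"
  shows "prod_idem S (st s) t \<and> prod_idem S s (st t)"
proof -
  obtain r where r: "npo S r s" "npo S r t" using st unfolding sigma_def by blast
  define e where "e = st r \<cdot> r"
  have p: "r \<in> arr S" "s \<in> arr S" "t \<in> arr S" "dom S r = dom S s" "cod S r = cod S s" "dom S r = dom S t" "cod S r = cod S t"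
    using npoD[OF r(1)] npoD[OF r(2)] by auto
  have e: "e \<in> idems S" "e \<in> arr S" "dom S e = dom S r" "cod S e = dom S r" "e \<cdot> e = e"
    using st_idem[OF p(1)] idemsD p by (auto simp: e_def)
  have rs: "r = s \<cdot> e" and rt: "r = t \<cdot> e" using npo_right r e_def by auto
  have g: "st s \<cdot> r \<in> idems S"
  proof -
    have "(st s \<cdot> s) \<cdot> e \<in> idems S" using idem_prod[OF st_idem[OF p(2)] e(1)] p e by simp
    thus ?thesis using rs p e by simp
  qed
  have "st s \<cdot> r = (st s \<cdot> t) \<cdot> e" using rt p e by simp
  hence "npo S (st s \<cdot> r) (st s \<cdot> t)" using p e by (intro npoI[where e=e]) auto
  hence i1: "st s \<cdot> t \<in> idems S" using P5 g p m_arr st_arr st_dom by metis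
  define h where "h = t \<cdot> (e \<cdot> st t)"
  have h: "h \<in> idems S" unfolding h_def using F[OF p(3) e(1)] p e by simp
  have hr: "h = r \<cdot> st t" using rt p e by (simp add: h_def)
  have "(s \<cdot> st t) \<cdot> h = h"
  proof -
    have "(s \<cdot> st t) \<cdot> h = s \<cdot> ((st t \<cdot> t) \<cdot> (e \<cdot> st t))" using p e by (simp add: h_def)
    also have "(st t \<cdot> t) \<cdot> (e \<cdot> st t) = e \<cdot> ((st t \<cdot> t) \<cdot> st t)"
      using comm_x[OF e(1) st_idem[OF p(3)], of "st t"] p e by simp
    also have "(st t \<cdot> t) \<cdot> st t = st t" using p by simp
    also have "s \<cdot> (e \<cdot> st t) = r \<cdot> st t" using rs p e by simp
    finally show ?thesis using hr by simp
  qed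
  hence "npo S h (s \<cdot> st t)" using p e h idemsD[OF h] hr by (intro npoI[where e=h]) auto
  hence i2: "s \<cdot> st t \<in> idems S" using P5 h p m_arr st_arr st_cod by metis
  show ?thesis unfolding prod_idem_def composable_def using i1 i2 p by auto
qed

lemma three_five: assumes P3: "\<forall>s t. (s, t) \<in> sigma S \<longrightarrow> prod_idem S (st s) t \<and> prod_idem S s (st t)"
  and s: "s \<in> arr S" and e: "e \<in> idems S" and n: "npo S e s"
  shows "s \<in> idems S"
proof -
  obtain f where f: "f \<in> idems S" "dom S s = cod S f" "e = s \<cdot> f"
    using n unfolding npo_def composable_def by auto
  have ea: "e \<in> arr S" "dom S e = cod S e" using idemsD[OF e] by auto
  have fa: "f \<in> arr S" using idemsD[OF f(1)] by auto
  have p: "dom S e = dom S s" "cod S e = cod S s" using npoD[OF n] by auto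
  have "e = (s \<cdot> st s) \<cdot> e" using f s fa by simp
  hence "npo S e (s \<cdot> st s)" using ea p s e by (intro npoI[where e=e]) auto
  hence "(s, s \<cdot> st s) \<in> sigma S" using n s unfolding sigma_def by auto
  hence "prod_idem S (st s) (s \<cdot> st s)" using P3 by blast
  hence "st s \<in> idems S" using s unfolding prod_idem_def by simp
  hence "st s = s" using idem_st st_st s by metis
  thus ?thesis using `st s \<in> idems S` by simp
qed

lemma four_rev: assumes s: "s \<in> arr S" and t: "t \<in> arr S"
  and a: "prod_idem S (st s) t" "prod_idem S s (st t)"
  shows "(s, t) \<in> sigma S"
proof -
  have c: "cod S s = cod S t" "dom S s = dom S t" using a s t unfolding prod_idem_def composable_def by auto
  have i: "st s \<cdot> t \<in> idems S" using a unfolding prod_idem_def by auto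
  define r where "r = s \<cdot> (st s \<cdot> t)"
  have n1: "npo S r s" using s t c i by (intro npoI[where e="st s \<cdot> t"]) (auto simp: r_def)
  have L': "(s \<cdot> st s) \<cdot> t = t \<cdot> (st t \<cdot> ((s \<cdot> st s) \<cdot> t)) \<and> st t \<cdot> ((s \<cdot> st s) \<cdot> t) \<in> idems S"
    using L[OF st_idem2[OF s] t] s t c by simp
  have "r = (s \<cdot> st s) \<cdot> t" using s t c by (simp add: r_def)
  hence n2: "npo S r t" using L' s t c by (intro npoI[where e="st t \<cdot> ((s \<cdot> st s) \<cdot> t)"]) (auto simp: r_def)
  show ?thesis unfolding sigma_def using n1 n2 s t by blast
qed

lemma Q1: assumes "(a \<cdot> a, a) \<in> sigma S" "a \<in> arr S" "dom S a = cod S a"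
  shows "\<exists>e. e \<in> idems S \<and> (a, e) \<in> sigma S"
proof -
  obtain r where r: "npo S r (a \<cdot> a)" "npo S r a" using assms(1) unfolding sigma_def by blast
  have p: "r \<in> arr S" "dom S r = dom S a" "cod S r = cod S a" using npoD[OF r(2)] by auto
  have "r = (a \<cdot> a) \<cdot> (st r \<cdot> r)" using npo_right r by blast
  also have "\<dots> = a \<cdot> (a \<cdot> (st r \<cdot> r))" using assms p by simp
  also have "a \<cdot> (st r \<cdot> r) = r" using npo_right r by metis
  finally have ar: "r = a \<cdot> r" .
  have i: "r \<cdot> st r \<in> idems S" using st_idem2 p by simp
  have "r \<cdot> st r = a \<cdot> (r \<cdot> st r)"
  proof -
    have "r \<cdot> st r = (a \<cdot> r) \<cdot> st r" using ar by simp
    thus ?thesis using assms p by simp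
  qed
  hence "npo S (r \<cdot> st r) a" using i p assms by (intro npoI[where e="r \<cdot> st r"]) auto
  moreover have "npo S (r \<cdot> st r) (r \<cdot> st r)" using npo_refl p by simp
  ultimately have "(a, r \<cdot> st r) \<in> sigma S" using assms p unfolding sigma_def by auto
  thus ?thesis using i by blast
qed

lemma pi_mem: "s \<in> arr S \<Longrightarrow> s \<in> pi_sigma S s"
  unfolding pi_sigma_def using sigma_refl by auto

lemma pi_eq: "(a, b) \<in> sigma S \<Longrightarrow> pi_sigma S a = pi_sigma S b"
  unfolding pi_sigma_def using sigma_sym sigma_trans by blast

lemma x0: "s \<in> arr S \<Longrightarrow> (s, SOME x. x \<in> pi_sigma S s) \<in> sigma S"
  using someI[of "\<lambda>x. x \<in> pi_sigma S s" s] pi_mem unfolding pi_sigma_def by auto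

lemma quot_idem: assumes s: "s \<in> arr S"
  shows "pi_sigma S s \<in> idems (quot_sigma S) \<longleftrightarrow>
    (let x = SOME x. x \<in> pi_sigma S s in dom S x = cod S x \<and> pi_sigma S (x \<cdot> x) = pi_sigma S s)"
  using s unfolding idems_def composable_def quot_sigma_def Let_def by auto

lemma one_two: assumes P1: "idempotent_pure S (sigma S)" and s: "s \<in> arr S"
  and q: "pi_sigma S s \<in> idems (quot_sigma S)" shows "s \<in> idems S"
proof -
  define x where "x = (SOME x. x \<in> pi_sigma S s)"
  have sx: "(s, x) \<in> sigma S" using x0 s x_def by simp
  have d: "dom S x = cod S x" and pe: "pi_sigma S (x \<cdot> x) = pi_sigma S s"
    using quot_idem[OF s] q x_def by (auto simp: Let_def)
  have "s \<in> pi_sigma S (x \<cdot> x)" using pe pi_mem s by simp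
  hence "(x \<cdot> x, s) \<in> sigma S" unfolding pi_sigma_def by auto
  hence "(x \<cdot> x, x) \<in> sigma S" using sx sigma_trans by blast
  then obtain e where e: "e \<in> idems S" "(x, e) \<in> sigma S" using Q1 d sigma_par sx by blast
  hence "x \<in> idems S" using P1 unfolding idempotent_pure_def by blast
  thus ?thesis using P1 sx unfolding idempotent_pure_def by blast
qed

lemma two_one: assumes P2: "\<forall>s\<in>arr S. pi_sigma S s \<in> idems (quot_sigma S) \<longrightarrow> s \<in> idems S"
  shows "idempotent_pure S (sigma S)"
  unfolding idempotent_pure_def
proof (intro allI impI)
  fix s e assume a: "(s, e) \<in> sigma S \<and> e \<in> idems S"
  have s: "s \<in> arr S" using a sigma_par by blast
  define x where "x = (SOME x. x \<in> pi_sigma S s)"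
  have sx: "(s, x) \<in> sigma S" using x0 s x_def by simp
  have xe: "(x, e) \<in> sigma S" using sx a sigma_sym sigma_trans by blast
  then obtain r where r: "npo S r x" "npo S r e" unfolding sigma_def by blast
  have ri: "r \<in> idems S" using npo_idem r a by blast
  have ra: "r \<in> arr S" "dom S r = cod S r" "r \<cdot> r = r" using idemsD[OF ri] by auto
  have p: "x \<in> arr S" "dom S r = dom S x" "cod S r = cod S x" using npoD[OF r(1)] by auto
  have d: "dom S x = cod S x" using ra p by simp
  have xr: "r = x \<cdot> r" using npo_right[OF r(1)] idem_st[OF ri] ra by simp
  have "r = (x \<cdot> x) \<cdot> r" using xr p d ra by simp
  hence "npo S r (x \<cdot> x)" using ri ra p d by (intro npoI[where e=r]) auto
  hence "(x \<cdot> x, x) \<in> sigma S" using r p d unfolding sigma_def by auto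
  hence "pi_sigma S (x \<cdot> x) = pi_sigma S s" using pi_eq sx by (metis sigma_sym)
  hence "pi_sigma S s \<in> idems (quot_sigma S)" using quot_idem[OF s] d x_def by (simp add: Let_def)
  thus "s \<in> idems S" using P2 s by blast
qed

end

theorem mainTheorem2:
  fixes S :: "('a, 'b) sgpd"
  assumes "inverse_semigroupoid S"
  defines "P1 \<equiv> E_unitary S"
    and "P2 \<equiv> (\<forall>s\<in>arr S. pi_sigma S s \<in> idems (quot_sigma S) \<longrightarrow> s \<in> idems S)"
    and "P3 \<equiv> (\<forall>s t. (s, t) \<in> sigma S \<longrightarrow>
                 prod_idem S (star S s) t \<and> prod_idem S s (star S t))"
    and "P4 \<equiv> (\<forall>s\<in>arr S. \<forall>t\<in>arr S. (s, t) \<in> sigma S \<longleftrightarrow>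
                 prod_idem S (star S s) t \<and> prod_idem S s (star S t))"
    and "P5 \<equiv> (\<forall>s e. s \<in> arr S \<and> e \<in> idems S \<and> npo S e s \<longrightarrow> s \<in> idems S)"
  shows "(P1 \<longleftrightarrow> P2) \<and> (P2 \<longleftrightarrow> P3) \<and> (P3 \<longleftrightarrow> P4) \<and> (P4 \<longleftrightarrow> P5)"
proof -
  note inv = assms(1)
  have 15: "P1 \<longleftrightarrow> P5" unfolding P1_def P5_def E_unitary_def
    using one_five[OF inv] five_one[OF inv] by blast
  have 12: "P1 \<longleftrightarrow> P2" unfolding P1_def P2_def E_unitary_def
    using one_two[OF inv] two_one[OF inv] by blast
  have 53: "P5 \<longleftrightarrow> P3" unfolding P3_def P5_def
    using five_three[OF inv] three_five[OF inv] by blast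
  have 34: "P3 \<longleftrightarrow> P4" unfolding P3_def P4_def
    using four_rev[OF inv] sigma_par[OF inv] by blast
  show ?thesis using 15 12 53 34 by blast
qed

end
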